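(* For every $n\ge1$ and every $A\subseteq[n]$, the set-alternating domain $D_X(A)$ is a copious peak-pit domain and is a maximal Condorcet domain on $[n]$.
   Context: Alternatives are $X=[n]$, with societal axis $1<\dots<n$; linear orders are written as strings, leftmost ranked highest. For $A\subseteq[n]$, $D_X(A)$ is the set of all linear orders $q$ on $[n]$ such that for every triple $i<j<k$: if $j\in A$ then $i$ is not ranked last among $\{i,j,k\}$ in $q$ ($1N3$), and if $j\notin A$ then $k$ is not ranked first among $\{i,j,k\}$ in $q$ ($3N1$). A domain is a set of linear orders on $[n]$. A Condorcet domain is a domain $D$ such that for every profile with an odd number of voters whose preferences all lie in $D$, the pairwise majority relation is transitive. It is maximal if no Condorcet domain on $[n]$ strictly contains it. A domain is copious if its restriction to every triple of alternatives contains exactly 4 distinct orders. For a triple $a<b<c$, call them the 1st, 2nd, 3rd alternative; the never condition $xNp$ ($x,p\in\{1,2,3\}$) says the $x$-th alternative of the triple is never in position $p$ within the triple. A domain is peak-pit if for every triple its restriction satisfies some never condition of the form $xN3$ or $xN1$. *)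

theory Defs
  imports Main
begin

text \<open>Linear orders on [n] = {1..n} are lists (leftmost = ranked highest) that
  enumerate {1..n} without repetition.\<close>
definition lin_orders :: "nat \<Rightarrow> nat list set" where
  "lin_orders n = {q. distinct q \<and> set q = {1..n}}"

definition prefers :: "nat list \<Rightarrow> nat \<Rightarrow> nat \<Rightarrow> bool" where
  "prefers q a b \<longleftrightarrow> (\<exists>i j. i < j \<and> j < length q \<and> q ! i = a \<and> q ! j = b)"

definition maj :: "nat list list \<Rightarrow> nat \<Rightarrow> nat \<Rightarrow> bool" where
  "maj P a b \<longleftrightarrow> 2 * length (filter (\<lambda>q. prefers q a b) P) > length P"

definition condorcet_domain :: "nat \<Rightarrow> nat list set \<Rightarrow> bool" where
  "condorcet_domain n D \<longleftrightarrow> D \<subseteq> lin_orders n \<and>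
     (\<forall>P. odd (length P) \<and> set P \<subseteq> D \<longrightarrow>
        (\<forall>a\<in>{1..n}. \<forall>b\<in>{1..n}. \<forall>c\<in>{1..n}. maj P a b \<and> maj P b c \<longrightarrow> maj P a c))"

definition maximal_condorcet_domain :: "nat \<Rightarrow> nat list set \<Rightarrow> bool" where
  "maximal_condorcet_domain n D \<longleftrightarrow> condorcet_domain n D \<and>
     (\<forall>D'. condorcet_domain n D' \<and> D \<subseteq> D' \<longrightarrow> D' = D)"

definition restr :: "nat list \<Rightarrow> nat set \<Rightarrow> nat list" where
  "restr q T = filter (\<lambda>x. x \<in> T) q"

definition copious :: "nat \<Rightarrow> nat list set \<Rightarrow> bool" where
  "copious n D \<longleftrightarrow> (\<forall>a b c. 1 \<le> a \<and> a < b \<and> b < c \<and> c \<le> n \<longrightarrow>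
     card ((\<lambda>q. restr q {a, b, c}) ` D) = 4)"

text \<open>Never condition xNp on the triple a<b<c: the x-th alternative of the triple
  is never in position p (1-based) within the restricted order.\<close>
definition never_cond :: "nat list set \<Rightarrow> nat \<Rightarrow> nat \<Rightarrow> nat \<Rightarrow> nat \<Rightarrow> nat \<Rightarrow> bool" where
  "never_cond D a b c x p \<longleftrightarrow>
     (\<forall>q\<in>D. restr q {a, b, c} ! (p - 1) \<noteq> [a, b, c] ! (x - 1))"

definition peak_pit :: "nat \<Rightarrow> nat list set \<Rightarrow> bool" where
  "peak_pit n D \<longleftrightarrow> (\<forall>a b c. 1 \<le> a \<and> a < b \<and> b < c \<and> c \<le> n \<longrightarrow>
     (\<exists>x\<in>{1, 2, 3}. \<exists>p\<in>{1, 3}. never_cond D a b c x p))"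

definition DX :: "nat \<Rightarrow> nat set \<Rightarrow> nat list set" where
  "DX n A = {q \<in> lin_orders n. \<forall>i j k. 1 \<le> i \<and> i < j \<and> j < k \<and> k \<le> n \<longrightarrow>
     (j \<in> A \<longrightarrow> \<not> (prefers q j i \<and> prefers q k i)) \<and>
     (j \<notin> A \<longrightarrow> \<not> (prefers q k i \<and> prefers q k j))}"

end

theory Submission
  imports Defs "HOL-Library.Product_Lexorder"
begin


lemma prefers_Nil[simp]: "\<not> prefers [] x y"
  by (simp add: prefers_def)

lemma prefers_Cons: "prefers (a # q) x y \<longleftrightarrow> (x = a \<and> y \<in> set q) \<or> prefers q x y"
proof
  assume "prefers (a # q) x y"
  then obtain i j where ij: "i < j" "j < length (a # q)" "(a # q) ! i = x" "(a # q) ! j = y"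
    unfolding prefers_def by blast
  show "(x = a \<and> y \<in> set q) \<or> prefers q x y"
  proof (cases i)
    case 0
    then obtain j' where "j = Suc j'" using ij by (cases j) auto
    then show ?thesis using ij 0 by auto
  next
    case (Suc i')
    then obtain j' where "j = Suc j'" using ij by (cases j) auto
    then show ?thesis using ij Suc unfolding prefers_def by (intro disjI2 exI[of _ i'] exI[of _ j']) auto
  qed
next
  assume "(x = a \<and> y \<in> set q) \<or> prefers q x y"
  then show "prefers (a # q) x y"
  proof
    assume "x = a \<and> y \<in> set q"
    then obtain j where "j < length q" "q ! j = y" "x = a" by (auto simp: in_set_conv_nth)
    then show ?thesis unfolding prefers_def by (intro exI[of _ 0] exI[of _ "Suc j"]) auto
  next
    assume "prefers q x y"
    then obtain i j where "i < j" "j < length q" "q ! i = x" "q ! j = y" unfolding prefers_def by blast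
    then show ?thesis unfolding prefers_def by (intro exI[of _ "Suc i"] exI[of _ "Suc j"]) auto
  qed
qed

lemma prefers_set: "prefers q x y \<Longrightarrow> x \<in> set q \<and> y \<in> set q"
  by (induction q) (auto simp: prefers_Cons)

lemma prefers_filter: "prefers (filter P q) x y \<longleftrightarrow> P x \<and> P y \<and> prefers q x y"
  by (induction q) (auto simp: prefers_Cons)

lemma prefers_sorted:
  fixes f :: "nat \<Rightarrow> 'k::linorder"
  assumes "sorted_wrt (\<lambda>x y. f x < f y) q" "x \<in> set q" "y \<in> set q"
  shows "prefers q x y \<longleftrightarrow> f x < f y"
  using assms
proof (induction q)
  case Nil then show ?case by simp
next
  case (Cons a q)
  have h: "\<forall>z\<in>set q. f a < f z" "sorted_wrt (\<lambda>x y. f x < f y) q" using Cons.prems by auto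
  show ?case
  proof (cases "x = a")
    case True
    then show ?thesis using h Cons.prems by (cases "y = a") (auto simp: prefers_Cons dest: prefers_set)
  next
    case False
    then have x: "x \<in> set q" using Cons.prems by auto
    show ?thesis
    proof (cases "y = a")
      case True
      then show ?thesis using h x False by (auto simp: prefers_Cons dest: prefers_set less_asym)
    next
      case False
      then show ?thesis using Cons x \<open>x \<noteq> a\<close> by (auto simp: prefers_Cons)
    qed
  qed
qed

lemma prefers_irrefl: "distinct q \<Longrightarrow> \<not> prefers q x x"
  by (induction q) (auto simp: prefers_Cons)

lemma prefers_asym: "distinct q \<Longrightarrow> prefers q x y \<Longrightarrow> \<not> prefers q y x"
  by (induction q) (auto simp: prefers_Cons dest: prefers_set)

lemma prefers_trans: "distinct q \<Longrightarrow> prefers q x y \<Longrightarrow> prefers q y z \<Longrightarrow> prefers q x z"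
  by (induction q) (auto simp: prefers_Cons dest: prefers_set)

lemma prefers_total: "x \<in> set q \<Longrightarrow> y \<in> set q \<Longrightarrow> x \<noteq> y \<Longrightarrow> prefers q x y \<or> prefers q y x"
  by (induction q) (auto simp: prefers_Cons)

definition ordk :: "(nat \<Rightarrow> 'k::linorder) \<Rightarrow> nat \<Rightarrow> nat list" where
  "ordk f n = sort_key f [1..<Suc n]"

lemma ordk_lin: "ordk f n \<in> lin_orders n"
  by (auto simp: ordk_def lin_orders_def)

lemma ordk_pref:
  assumes "inj_on f {1..n}" "x \<in> {1..n}" "y \<in> {1..n}"
  shows "prefers (ordk f n) x y \<longleftrightarrow> f x < f y"
proof -
  have "sorted (map f (ordk f n))" by (simp add: ordk_def)
  moreover have "distinct (map f (ordk f n))"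
  proof -
    have "{1..<Suc n} = {1..n}" by auto
    then show ?thesis using assms(1) by (simp add: ordk_def distinct_map del: upt_Suc)
  qed
  ultimately have "sorted_wrt (<) (map f (ordk f n))" by (simp add: strict_sorted_iff)
  then have "sorted_wrt (\<lambda>x y. f x < f y) (ordk f n)" by (simp add: sorted_wrt_map)
  then show ?thesis using assms by (intro prefers_sorted) (auto simp: ordk_def)
qed

lemma DX_key:
  fixes f :: "nat \<Rightarrow> 'k::linorder"
  assumes inj: "inj_on f {1..n}"
    and c: "\<And>i j k. 1 \<le> i \<Longrightarrow> i < j \<Longrightarrow> j < k \<Longrightarrow> k \<le> n \<Longrightarrow>
       (j \<in> A \<longrightarrow> \<not> (f j < f i \<and> f k < f i)) \<and> (j \<notin> A \<longrightarrow> \<not> (f k < f i \<and> f k < f j))"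
  shows "ordk f n \<in> DX n A"
proof -
  have "\<forall>i j k. 1 \<le> i \<and> i < j \<and> j < k \<and> k \<le> n \<longrightarrow>
     (j \<in> A \<longrightarrow> \<not> (prefers (ordk f n) j i \<and> prefers (ordk f n) k i)) \<and>
     (j \<notin> A \<longrightarrow> \<not> (prefers (ordk f n) k i \<and> prefers (ordk f n) k j))"
  proof (intro allI impI)
    fix i j k assume h: "1 \<le> i \<and> i < j \<and> j < k \<and> k \<le> n"
    then have "i \<in> {1..n}" "j \<in> {1..n}" "k \<in> {1..n}" by auto
    then show "(j \<in> A \<longrightarrow> \<not> (prefers (ordk f n) j i \<and> prefers (ordk f n) k i)) \<and>
     (j \<notin> A \<longrightarrow> \<not> (prefers (ordk f n) k i \<and> prefers (ordk f n) k j))"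
      using c[of i j k] h by (simp add: ordk_pref[OF inj])
  qed
  then show ?thesis using ordk_lin[of f n] unfolding DX_def by blast
qed

definition gT :: "nat set \<Rightarrow> nat \<Rightarrow> nat \<Rightarrow> nat \<Rightarrow> nat" where
  "gT A a c x = (if x < a then 0 else if x = c then 2 else if x = a then 3 else if c < x then 5
     else if x \<in> A then 4 else 1)"

definition kT :: "nat set \<Rightarrow> nat \<Rightarrow> nat \<Rightarrow> nat \<Rightarrow> nat \<times> nat" where
  "kT A a c x = (gT A a c x, x)"

lemma inj_kT: "inj_on (kT A a c) S"
  by (auto simp: inj_on_def kT_def)

lemma kT_less: "kT A a c x < kT A a c y \<longleftrightarrow> gT A a c x < gT A a c y \<or> (gT A a c x = gT A a c y \<and> x < y)"
  by (auto simp: kT_def)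

lemma T_DX1: "1 \<le> i \<Longrightarrow> i < j \<Longrightarrow> j < k \<Longrightarrow> a < (c::nat) \<Longrightarrow> j \<in> A \<Longrightarrow>
  \<not> (kT A a c j < kT A a c i \<and> kT A a c k < kT A a c i)"
  unfolding kT_less gT_def by (simp split: if_split_asm)
lemma T_DX2: "1 \<le> i \<Longrightarrow> i < j \<Longrightarrow> j < k \<Longrightarrow> a < (c::nat) \<Longrightarrow> j \<notin> A \<Longrightarrow>
  \<not> (kT A a c k < kT A a c i \<and> kT A a c k < kT A a c j)"
  unfolding kT_less gT_def by (simp split: if_split_asm)

lemma T_DX: assumes "a < c" shows "ordk (kT A a c) n \<in> DX n A"
proof (rule DX_key[OF inj_kT])
  fix i j k :: nat assume "1 \<le> i" "i < j" "j < k" "k \<le> n"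
  then show "(j \<in> A \<longrightarrow> \<not> (kT A a c j < kT A a c i \<and> kT A a c k < kT A a c i)) \<and>
       (j \<notin> A \<longrightarrow> \<not> (kT A a c k < kT A a c i \<and> kT A a c k < kT A a c j))"
    using T_DX1[of i j k a c A] T_DX2[of i j k a c A] assms by blast
qed

lemma id_DX: "ordk (\<lambda>x::nat. x) n \<in> DX n A"
  by (rule DX_key) (auto simp: inj_on_def)

lemma set_restr: "set (restr q T) = set q \<inter> T" by (auto simp: restr_def)
lemma distinct_restr: "distinct q \<Longrightarrow> distinct (restr q T)" by (simp add: restr_def)
lemma prefers_restr: "prefers (restr q T) x y \<longleftrightarrow> x \<in> T \<and> y \<in> T \<and> prefers q x y"
  by (simp add: restr_def prefers_filter)

lemma len3: "length l = 3 \<Longrightarrow> \<exists>a b c. l = [a, b, c]"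
  by (cases l; cases "tl l"; cases "tl (tl l)") auto

lemma list3:
  assumes "distinct l" "set l = {x, y, z}" "x \<noteq> y" "y \<noteq> z" "x \<noteq> z"
    "prefers l x y" "prefers l y z"
  shows "l = [x, y, z]"
proof -
  have "length l = 3" using assms distinct_card[OF assms(1)] by auto
  then obtain a b c where l: "l = [a, b, c]" using len3 by blast
  have "prefers [a,b,c] x y" "prefers [a,b,c] y z" "distinct [a,b,c]" using assms l by auto
  then show ?thesis unfolding l by (auto simp: prefers_Cons)
qed

lemma restr3:
  assumes "q \<in> lin_orders n" "x \<in> {1..n}" "y \<in> {1..n}" "z \<in> {1..n}"
    "x \<noteq> y" "y \<noteq> z" "x \<noteq> z" "prefers q x y" "prefers q y z"
  shows "restr q {x, y, z} = [x, y, z]"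
proof (rule list3)
  show "distinct (restr q {x, y, z})" using assms(1) by (simp add: lin_orders_def distinct_restr)
  show "set (restr q {x, y, z}) = {x, y, z}" using assms(1-4) by (auto simp: lin_orders_def set_restr)
  show "prefers (restr q {x, y, z}) x y" "prefers (restr q {x, y, z}) y z"
    using assms(8,9) by (auto simp: prefers_restr)
qed (use assms in auto)

lemma restr6:
  assumes "q \<in> lin_orders n" "x \<in> {1..n}" "y \<in> {1..n}" "z \<in> {1..n}"
    "x \<noteq> y" "y \<noteq> z" "x \<noteq> z"
  shows "restr q {x, y, z} \<in> {[x,y,z],[x,z,y],[y,x,z],[y,z,x],[z,x,y],[z,y,x]}"
proof -
  let ?l = "restr q {x, y, z}"
  have d: "distinct ?l" using assms(1) by (simp add: lin_orders_def distinct_restr)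
  have s: "set ?l = {x, y, z}" using assms(1-4) by (auto simp: lin_orders_def set_restr)
  have "length ?l = 3" using assms d s distinct_card[OF d] by auto
  then obtain p1 p2 p3 where l: "?l = [p1, p2, p3]" using len3 by blast
  have h: "p1 \<in> {x,y,z}" "p2 \<in> {x,y,z}" "p3 \<in> {x,y,z}" "distinct [p1,p2,p3]" using d s unfolding l by auto
  have "[p1,p2,p3] \<in> {[x,y,z],[x,z,y],[y,x,z],[y,z,x],[z,x,y],[z,y,x]}"
    using h by (simp only: insert_iff empty_iff simp_thms; elim disjE; simp)
  then show ?thesis unfolding l .
qed


lemma DX_lin: "DX n A \<subseteq> lin_orders n" by (auto simp: DX_def)

lemma DX_at: "q \<in> DX n A \<Longrightarrow> 1 \<le> i \<Longrightarrow> i < j \<Longrightarrow> j < k \<Longrightarrow> k \<le> n \<Longrightarrow>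
   (j \<in> A \<longrightarrow> \<not> (prefers q j i \<and> prefers q k i)) \<and> (j \<notin> A \<longrightarrow> \<not> (prefers q k i \<and> prefers q k j))"
  unfolding DX_def by blast

definition S4 :: "nat set \<Rightarrow> nat \<Rightarrow> nat \<Rightarrow> nat \<Rightarrow> nat list set" where
  "S4 A a b c = {[a,b,c],[a,c,b],[b,a,c], if b \<in> A then [c,a,b] else [b,c,a]}"

lemma restr_sub:
  assumes q: "q \<in> DX n A" and abc: "1 \<le> a" "a < b" "b < c" "c \<le> n"
  shows "restr q {a, b, c} \<in> S4 A a b c"
proof -
  let ?l = "restr q {a, b, c}"
  have lin: "q \<in> lin_orders n" using q DX_lin by blast
  have r6: "?l \<in> {[a,b,c],[a,c,b],[b,a,c],[b,c,a],[c,a,b],[c,b,a]}"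
    by (rule restr6[OF lin]) (use abc in auto)
  have e: "prefers q u v = prefers ?l u v" if "u \<in> {a,b,c}" "v \<in> {a,b,c}" for u v
    using that by (simp add: prefers_restr)
  have c: "(b \<in> A \<longrightarrow> \<not> (prefers q b a \<and> prefers q c a)) \<and> (b \<notin> A \<longrightarrow> \<not> (prefers q c a \<and> prefers q c b))"
    using DX_at[OF q abc] .
  have e1: "prefers q b a = prefers ?l b a" "prefers q c a = prefers ?l c a" "prefers q c b = prefers ?l c b"
    using e by auto
  have d: "a \<noteq> b" "b \<noteq> c" "a \<noteq> c" using abc by auto
  from r6 have "?l = [a,b,c] \<or> ?l = [a,c,b] \<or> ?l = [b,a,c] \<or> ?l = [b,c,a] \<or> ?l = [c,a,b] \<or> ?l = [c,b,a]"
    by simp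
  then show ?thesis
  proof (elim disjE)
    assume l: "?l = [b,c,a]"
    then show ?thesis using c e1 d unfolding l S4_def by (cases "b \<in> A") (simp_all add: prefers_Cons)
  next
    assume l: "?l = [c,a,b]"
    then show ?thesis using c e1 d unfolding l S4_def by (cases "b \<in> A") (simp_all add: prefers_Cons)
  next
    assume l: "?l = [c,b,a]"
    then show ?thesis using c e1 d unfolding l S4_def by (cases "b \<in> A") (simp_all add: prefers_Cons)
  qed (auto simp: S4_def)
qed

lemma wit:
  assumes abc: "1 \<le> a" "a < b" "b < c" "c \<le> n"
  shows "S4 A a b c \<subseteq> (\<lambda>q. restr q {a, b, c}) ` DX n A"
proof -
  have m: "a \<in> {1..n}" "b \<in> {1..n}" "c \<in> {1..n}" using abc by auto
  have inj: "inj_on (\<lambda>x::nat. x) {1..n}" by simp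
  have "restr (ordk (\<lambda>x::nat. x) n) {a, b, c} = [a, b, c]"
    by (rule restr3[OF ordk_lin]) (use abc m in \<open>auto simp: ordk_pref[OF inj]\<close>)
  then have 1: "[a,b,c] \<in> (\<lambda>q. restr q {a, b, c}) ` DX n A" by (rule image_eqI[OF sym id_DX])
  have e1: "{a, c, b} = {a, b, c}" "{b, a, c} = {a, b, c}" "{c, a, b} = {a, b, c}" "{b, c, a} = {a, b, c}"
    by auto
  have "restr (ordk (kT A b c) n) {a, c, b} = [a, c, b]"
    by (rule restr3[OF ordk_lin]) (use abc m in \<open>auto simp: ordk_pref[OF inj_kT] kT_less gT_def\<close>)
  then have "restr (ordk (kT A b c) n) {a, b, c} = [a, c, b]" by (simp only: e1)
  then have 2: "[a,c,b] \<in> (\<lambda>q. restr q {a, b, c}) ` DX n A"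
    by (rule image_eqI[OF sym T_DX]) (use abc in simp)
  have "restr (ordk (kT A a b) n) {b, a, c} = [b, a, c]"
    by (rule restr3[OF ordk_lin]) (use abc m in \<open>auto simp: ordk_pref[OF inj_kT] kT_less gT_def\<close>)
  then have "restr (ordk (kT A a b) n) {a, b, c} = [b, a, c]" by (simp only: e1)
  then have 3: "[b,a,c] \<in> (\<lambda>q. restr q {a, b, c}) ` DX n A"
    by (rule image_eqI[OF sym T_DX]) (use abc in simp)
  have 4: "(if b \<in> A then [c,a,b] else [b,c,a]) \<in> (\<lambda>q. restr q {a, b, c}) ` DX n A"
  proof (cases "b \<in> A")
    case True
    have "restr (ordk (kT A a c) n) {c, a, b} = [c, a, b]"
      by (rule restr3[OF ordk_lin]) (use abc m True in \<open>auto simp: ordk_pref[OF inj_kT] kT_less gT_def\<close>)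
    then have "restr (ordk (kT A a c) n) {a, b, c} = [c, a, b]" by (simp only: e1)
    then have "[c,a,b] \<in> (\<lambda>q. restr q {a, b, c}) ` DX n A"
      by (rule image_eqI[OF sym T_DX]) (use abc in simp)
    then show ?thesis using True by simp
  next
    case False
    have "restr (ordk (kT A a c) n) {b, c, a} = [b, c, a]"
      by (rule restr3[OF ordk_lin]) (use abc m False in \<open>auto simp: ordk_pref[OF inj_kT] kT_less gT_def\<close>)
    then have "restr (ordk (kT A a c) n) {a, b, c} = [b, c, a]" by (simp only: e1)
    then have "[b,c,a] \<in> (\<lambda>q. restr q {a, b, c}) ` DX n A"
      by (rule image_eqI[OF sym T_DX]) (use abc in simp)
    then show ?thesis using False by simp
  qed
  show ?thesis using 1 2 3 4 unfolding S4_def by blast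
qed

lemma copious_DX: "copious n (DX n A)"
  unfolding copious_def
proof (intro allI impI)
  fix a b c :: nat assume h: "1 \<le> a \<and> a < b \<and> b < c \<and> c \<le> n"
  have "(\<lambda>q. restr q {a, b, c}) ` DX n A \<subseteq> S4 A a b c"
    using restr_sub[of _ n A a b c] h by blast
  then have "(\<lambda>q. restr q {a, b, c}) ` DX n A = S4 A a b c"
    using wit[of a b c n A] h by (intro equalityI) auto
  moreover have "card (S4 A a b c) = 4" using h unfolding S4_def by auto
  ultimately show "card ((\<lambda>q. restr q {a, b, c}) ` DX n A) = 4" by simp
qed

lemma peak_pit_DX: "peak_pit n (DX n A)"
  unfolding peak_pit_def
proof (intro allI impI)
  fix a b c :: nat assume h: "1 \<le> a \<and> a < b \<and> b < c \<and> c \<le> n"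
  show "\<exists>x\<in>{1, 2, 3}. \<exists>p\<in>{1, 3}. never_cond (DX n A) a b c x p"
  proof (cases "b \<in> A")
    case True
    have "never_cond (DX n A) a b c 1 3" unfolding never_cond_def
    proof
      fix q assume "q \<in> DX n A"
      then have "restr q {a, b, c} \<in> S4 A a b c" using restr_sub h by blast
      then show "restr q {a, b, c} ! (3 - 1) \<noteq> [a, b, c] ! (1 - 1)" using h True by (auto simp: S4_def)
    qed
    then show ?thesis by blast
  next
    case False
    have "never_cond (DX n A) a b c 3 1" unfolding never_cond_def
    proof
      fix q assume "q \<in> DX n A"
      then have "restr q {a, b, c} \<in> S4 A a b c" using restr_sub h by blast
      then show "restr q {a, b, c} ! (1 - 1) \<noteq> [a, b, c] ! (3 - 1)" using h False by (auto simp: S4_def)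
    qed
    then show ?thesis by blast
  qed
qed



lemma filter_overlap:
  "length (filter P xs) + length (filter Q xs) \<le> length xs + length (filter (\<lambda>x. P x \<and> Q x) xs)"
  by (induction xs) auto

lemma maj_meet:
  assumes "maj P a b" "maj P c d"
  shows "\<exists>q\<in>set P. prefers q a b \<and> prefers q c d"
proof -
  have "length (filter (\<lambda>q. prefers q a b \<and> prefers q c d) P) > 0"
    using assms filter_overlap[of "\<lambda>q. prefers q a b" P "\<lambda>q. prefers q c d"] unfolding maj_def by linarith
  then show ?thesis by (metis (no_types, lifting) filter_False length_greater_0_conv)
qed

lemma lin_distinct: "q \<in> lin_orders n \<Longrightarrow> distinct q" by (simp add: lin_orders_def)

lemma maj_flip:
  assumes P: "set P \<subseteq> lin_orders n" and odd: "odd (length P)"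
    and ac: "a \<in> {1..n}" "c \<in> {1..n}" "a \<noteq> c" and nm: "\<not> maj P a c"
  shows "maj P c a"
proof -
  have "filter (\<lambda>q. prefers q c a) P = filter (\<lambda>q. \<not> prefers q a c) P"
  proof (rule filter_cong[OF refl])
    fix q assume "q \<in> set P"
    then have q: "q \<in> lin_orders n" using P by blast
    then have "a \<in> set q" "c \<in> set q" using ac by (auto simp: lin_orders_def)
    then show "prefers q c a = (\<not> prefers q a c)"
      using prefers_total[of a q c] prefers_asym[OF lin_distinct[OF q]] ac(3) by blast
  qed
  moreover have "length (filter (\<lambda>q. prefers q a c) P) + length (filter (\<lambda>q. \<not> prefers q a c) P) = length P"
    by (rule sum_length_filter_compl)
  ultimately show ?thesis using nm odd unfolding maj_def by presburger
qed

lemma cyc0: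
  assumes v: "v1 \<in> DX n A" "v2 \<in> DX n A" "v3 \<in> DX n A"
    and m: "a \<in> {1..n}" "b \<in> {1..n}" "c \<in> {1..n}" and ab: "a < b" "a < c" "b \<noteq> c"
    and p1: "prefers v1 a b" "prefers v1 b c"
    and p2: "prefers v2 b c" "prefers v2 c a"
    and p3: "prefers v3 c a" "prefers v3 a b"
  shows False
proof -
  have d: "distinct v1" "distinct v2" "distinct v3" using v DX_lin lin_distinct by blast+
  show False
  proof (cases "b < c")
    case True
    have c2: "(b \<in> A \<longrightarrow> \<not> (prefers v2 b a \<and> prefers v2 c a)) \<and> (b \<notin> A \<longrightarrow> \<not> (prefers v2 c a \<and> prefers v2 c b))"
      using DX_at[OF v(2), of a b c] m ab True by auto
    have c3: "(b \<in> A \<longrightarrow> \<not> (prefers v3 b a \<and> prefers v3 c a)) \<and> (b \<notin> A \<longrightarrow> \<not> (prefers v3 c a \<and> prefers v3 c b))"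
      using DX_at[OF v(3), of a b c] m ab True by auto
    have "prefers v2 b a" using prefers_trans[OF d(2) p2] .
    moreover have "prefers v3 c b" using prefers_trans[OF d(3) p3] .
    ultimately show False using c2 c3 p2 p3 by blast
  next
    case False
    then have cb: "c < b" using ab by auto
    have c2: "(c \<in> A \<longrightarrow> \<not> (prefers v2 c a \<and> prefers v2 b a)) \<and> (c \<notin> A \<longrightarrow> \<not> (prefers v2 b a \<and> prefers v2 b c))"
      using DX_at[OF v(2), of a c b] m ab cb by auto
    have "prefers v2 b a" using prefers_trans[OF d(2) p2] .
    then show False using c2 p2 by blast
  qed
qed

lemma cyc:
  assumes v: "v1 \<in> DX n A" "v2 \<in> DX n A" "v3 \<in> DX n A"
    and m: "a \<in> {1..n}" "b \<in> {1..n}" "c \<in> {1..n}" and d: "a \<noteq> b" "b \<noteq> c" "a \<noteq> c"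
    and p1: "prefers v1 a b" "prefers v1 b c"
    and p2: "prefers v2 b c" "prefers v2 c a"
    and p3: "prefers v3 c a" "prefers v3 a b"
  shows False
proof -
  consider "a < b \<and> a < c" | "b < a \<and> b < c" | "c < a \<and> c < b" using d by linarith
  then show False
  proof cases
    case 1 then show ?thesis using cyc0[OF v(1,2,3) m] d p1 p2 p3 by blast
  next
    case 2 then show ?thesis using cyc0[OF v(2,3,1) m(2,3,1)] d p1 p2 p3 by blast
  next
    case 3 then show ?thesis using cyc0[OF v(3,1,2) m(3,1,2)] d p1 p2 p3 by blast
  qed
qed

lemma maj_irrefl: "set P \<subseteq> lin_orders n \<Longrightarrow> \<not> maj P a a"
proof -
  assume P: "set P \<subseteq> lin_orders n"
  have "filter (\<lambda>q. prefers q a a) P = []"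
    using P by (auto simp: filter_empty_conv dest!: lin_distinct prefers_irrefl)
  then show ?thesis by (simp add: maj_def)
qed

lemma maj_asym: "set P \<subseteq> lin_orders n \<Longrightarrow> maj P a b \<Longrightarrow> \<not> maj P b a"
proof
  assume P: "set P \<subseteq> lin_orders n" and m: "maj P a b" "maj P b a"
  obtain q where "q \<in> set P" "prefers q a b" "prefers q b a" using maj_meet[OF m] by blast
  then show False using P prefers_asym lin_distinct by blast
qed

lemma condorcet_DX: "condorcet_domain n (DX n A)"
  unfolding condorcet_domain_def
proof (intro conjI allI impI ballI DX_lin)
  fix P a b c
  assume h: "odd (length P) \<and> set P \<subseteq> DX n A" and m: "a \<in> {1..n}" "b \<in> {1..n}" "c \<in> {1..n}"
    and mm: "maj P a b \<and> maj P b c"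
  have P: "set P \<subseteq> lin_orders n" using h DX_lin by blast
  show "maj P a c"
  proof (rule ccontr)
    assume nm: "\<not> maj P a c"
    have ab: "a \<noteq> b" using mm maj_irrefl[OF P] by blast
    have bc: "b \<noteq> c" using mm maj_irrefl[OF P] by blast
    have ac: "a \<noteq> c" using mm maj_asym[OF P] by blast
    have ca: "maj P c a" using maj_flip[OF P _ m(1,3) ac nm] h by blast
    obtain v1 where v1: "v1 \<in> set P" "prefers v1 a b" "prefers v1 b c" using maj_meet mm by blast
    obtain v2 where v2: "v2 \<in> set P" "prefers v2 b c" "prefers v2 c a" using maj_meet mm ca by blast
    obtain v3 where v3: "v3 \<in> set P" "prefers v3 c a" "prefers v3 a b" using maj_meet mm ca by blast
    show False using cyc[of v1 n A v2 v3 a b c] v1 v2 v3 h m ab bc ac by blast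
  qed
qed



lemma bad3:
  assumes cd: "condorcet_domain n D" and v: "v1 \<in> D" "v2 \<in> D" "v3 \<in> D"
    and m: "x \<in> {1..n}" "y \<in> {1..n}" "z \<in> {1..n}"
    and h: "maj [v1, v2, v3] x y" "maj [v1, v2, v3] y z" "\<not> maj [v1, v2, v3] x z"
  shows False
proof -
  have "odd (length [v1, v2, v3]) \<and> set [v1, v2, v3] \<subseteq> D" using v by simp
  then show False using cd h m unfolding condorcet_domain_def by blast
qed

lemma prefT: "x \<in> {1..n} \<Longrightarrow> y \<in> {1..n} \<Longrightarrow>
  prefers (ordk (kT A a c) n) x y \<longleftrightarrow> kT A a c x < kT A a c y"
  by (rule ordk_pref[OF inj_kT])

lemma prefI: "x \<in> {1..n} \<Longrightarrow> y \<in> {1..n} \<Longrightarrow> prefers (ordk (\<lambda>x::nat. x) n) x y \<longleftrightarrow> x < y"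
  by (rule ordk_pref) auto

lemma maximal_DX: "maximal_condorcet_domain n (DX n A)"
  unfolding maximal_condorcet_domain_def
proof (intro conjI allI impI condorcet_DX)
  fix D' assume h: "condorcet_domain n D' \<and> DX n A \<subseteq> D'"
  then have cd: "condorcet_domain n D'" and sub: "DX n A \<subseteq> D'" by auto
  have "D' \<subseteq> DX n A"
  proof
    fix q assume qD: "q \<in> D'"
    show "q \<in> DX n A"
    proof (rule ccontr)
      assume nq: "q \<notin> DX n A"
      have lin: "q \<in> lin_orders n" using cd qD unfolding condorcet_domain_def by blast
      then have dq: "distinct q" by (rule lin_distinct)
      obtain i j k where ijk: "1 \<le> i" "i < j" "j < k" "k \<le> n" and
        viol: "(j \<in> A \<and> prefers q j i \<and> prefers q k i) \<or> (j \<notin> A \<and> prefers q k i \<and> prefers q k j)"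
        using nq lin unfolding DX_def by blast
      have m: "i \<in> {1..n}" "j \<in> {1..n}" "k \<in> {1..n}" using ijk by auto
      have sq: "i \<in> set q" "j \<in> set q" "k \<in> set q" using lin m by (auto simp: lin_orders_def)
      have wI: "ordk (\<lambda>x::nat. x) n \<in> D'" using sub id_DX by blast
      have wik: "ordk (kT A i k) n \<in> D'" using sub T_DX ijk by (meson less_trans subsetD)
      have wjk: "ordk (kT A j k) n \<in> D'" using sub T_DX ijk by blast
      have wij: "ordk (kT A i j) n \<in> D'" using sub T_DX ijk by blast
      consider "prefers q k j \<and> prefers q j i" | "j \<in> A \<and> prefers q j k \<and> prefers q k i \<and> prefers q j i"
        | "j \<notin> A \<and> prefers q k i \<and> prefers q i j \<and> prefers q k j"
        using viol prefers_total[OF sq(2,3)] prefers_total[OF sq(1,2)] ijk by force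
      then show False
      proof cases
        case 1
        have "prefers q k i" using 1 prefers_trans[OF dq] by blast
        then have pq: "prefers q k j" "prefers q j i" "prefers q k i" "\<not> prefers q j k" "\<not> prefers q i j" "\<not> prefers q i k"
          using 1 prefers_asym[OF dq] by blast+
        show False
          apply (rule bad3[OF cd wjk qD wij m(3,2,1)])
          using pq ijk m by (simp_all add: maj_def prefT kT_less gT_def)
      next
        case 2
        then have pq: "prefers q j k" "prefers q j i" "prefers q k i" "\<not> prefers q k j" "\<not> prefers q i j" "\<not> prefers q i k"
          using prefers_asym[OF dq] by blast+
        show False
          apply (rule bad3[OF cd wI qD wik m(1,2,3)])
          using pq ijk m 2 by (simp_all add: maj_def prefT prefI kT_less gT_def)
      next
        case 3
        then have pq: "prefers q k i" "prefers q i j" "prefers q k j" "\<not> prefers q j k" "\<not> prefers q j i" "\<not> prefers q i k"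
          using prefers_asym[OF dq] by blast+
        show False
          apply (rule bad3[OF cd wI wik qD m(1,2,3)])
          using pq ijk m 3 by (simp_all add: maj_def prefT prefI kT_less gT_def)
      qed
    qed
  qed
  then show "D' = DX n A" using sub by blast
qed

theorem proposition1:
  fixes n :: nat and A :: "nat set"
  assumes "n \<ge> 1" and "A \<subseteq> {1..n}"
  shows "copious n (DX n A) \<and> peak_pit n (DX n A) \<and> maximal_condorcet_domain n (DX n A)"
  using copious_DX peak_pit_DX maximal_DX by blast

end
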